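(* Let $L\ge1$ and let $\pi_L:\mathfrak{OA}\to\mathfrak{OA}_{1,L}=\mathfrak{OA}/\mathfrak I_{(t-1)^L}$ be the projection. There are unique elements $\underline X_k,\underline Y_k\in\mathfrak{OA}_{1,L}$ ($0\le k<L$) such that for all $m\in\mathbb Z$ $$\pi_L(A_m)=\sum_{k=0}^{L-1}\binom mk\underline X_k,\qquad \pi_L(G_m)=\sum_{k=0}^{L-1}(-1)^k\binom mk\underline Y_k .$$ Moreover $\underline Y_k=\frac{(-1)^k}{4}[\underline X_k,\underline X_0]$ for $0\le k<L$.
   Context: Work over $\mathbb C$. $\mathfrak{sl}_2$ has basis $e,f,h$ with $[e,f]=h$, $[h,e]=2e$, $[h,f]=-2f$. $L(\mathfrak{sl}_2)=\mathbb C[t,t^{-1}]\otimes\mathfrak{sl}_2$ is the loop algebra with bracket $[p(t)x,q(t)y]=p(t)q(t)[x,y]$. The Onsager algebra is the Lie subalgebra $\mathfrak{OA}=\{p(t)e+p(t^{-1})f+q(t)h:\ p,q\in\mathbb C[t,t^{-1}],\ q(t^{-1})=-q(t)\}$ of $L(\mathfrak{sl}_2)$, spanned by $A_m=2t^me+2t^{-m}f$ and $G_m=(t^m-t^{-m})h$, $m\in\mathbb Z$. $\mathfrak I_{(t-1)^L}=\{p(t)e+p(t^{-1})f+q(t)h\in\mathfrak{OA}: p,q\in(t-1)^L\mathbb C[t,t^{-1}]\}$. For $m\in\mathbb Z$, $k\ge0$: $\binom mk=m(m-1)\cdots(m-k+1)/k!$, $\binom m0=1$. *)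

theory Defs
  imports Complex_Main "HOL-Library.Poly_Mapping" "HOL-Library.Product_Plus"
begin

text \<open>Laurent polynomials C[t,t^-1] as finitely supported maps int => complex
  (the exponent n carries the coefficient of t^n); convolution product.\<close>
type_synonym lpoly = "int \<Rightarrow>\<^sub>0 complex"

definition tpow :: "int \<Rightarrow> lpoly" where
  "tpow m = Poly_Mapping.single m 1"

definition lconst :: "complex \<Rightarrow> lpoly" where
  "lconst c = Poly_Mapping.single 0 c"

definition lp_inv :: "lpoly \<Rightarrow> lpoly" where
  "lp_inv p = (\<Sum>n\<in>Poly_Mapping.keys p. Poly_Mapping.single (- n) (Poly_Mapping.lookup p n))"

text \<open>Element p e + q f + r h of the loop algebra L(sl_2) represented as (p,q,r).\<close>
type_synonym loop = "lpoly \<times> lpoly \<times> lpoly"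

definition lbr :: "loop \<Rightarrow> loop \<Rightarrow> loop" where
  "lbr x y = (case x of (a1, b1, c1) \<Rightarrow> case y of (a2, b2, c2) \<Rightarrow>
     (2 * (c1 * a2 - a1 * c2), 2 * (b1 * c2 - c1 * b2), a1 * b2 - b1 * a2))"

definition lscale :: "complex \<Rightarrow> loop \<Rightarrow> loop" where
  "lscale c x = (case x of (a, b, r) \<Rightarrow> (lconst c * a, lconst c * b, lconst c * r))"

definition OA :: "loop set" where
  "OA = {(p, q, r). q = lp_inv p \<and> lp_inv r = - r}"

definition A_el :: "int \<Rightarrow> loop" where
  "A_el m = (2 * tpow m, 2 * tpow (- m), 0)"

definition G_el :: "int \<Rightarrow> loop" where
  "G_el m = (0, 0, tpow m - tpow (- m))"

definition Iideal :: "nat \<Rightarrow> loop set" where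
  "Iideal L = {(p, q, r) \<in> OA. (\<exists>u. p = (tpow 1 - 1) ^ L * u) \<and> (\<exists>u. r = (tpow 1 - 1) ^ L * u)}"

text \<open>Equality in the quotient OA_{1,L} = OA / I_{(t-1)^L}, via representatives.\<close>
definition qeq :: "nat \<Rightarrow> loop \<Rightarrow> loop \<Rightarrow> bool" where
  "qeq L x y \<longleftrightarrow> x - y \<in> Iideal L"

definition binomi :: "int \<Rightarrow> nat \<Rightarrow> complex" where
  "binomi m k = (of_int m :: complex) gchoose k"

definition rep_A :: "nat \<Rightarrow> (nat \<Rightarrow> loop) \<Rightarrow> bool" where
  "rep_A L X \<longleftrightarrow> (\<forall>m. qeq L (A_el m) (\<Sum>k<L. lscale (binomi m k) (X k)))"

definition rep_G :: "nat \<Rightarrow> (nat \<Rightarrow> loop) \<Rightarrow> bool" where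
  "rep_G L Y \<longleftrightarrow> (\<forall>m. qeq L (G_el m) (\<Sum>k<L. lscale ((-1) ^ k * binomi m k) (Y k)))"

end

theory Submission
  imports Defs
begin

lemma lookup_lp_inv: "Poly_Mapping.lookup (lp_inv p) n = Poly_Mapping.lookup p (- n)"
proof -
  have "Poly_Mapping.lookup (lp_inv p) n =
     (\<Sum>k\<in>Poly_Mapping.keys p. if k = - n then Poly_Mapping.lookup p k else 0)"
    unfolding lp_inv_def lookup_sum lookup_single when_def
    by (rule sum.cong) auto
  also have "\<dots> = Poly_Mapping.lookup p (- n)"
    by (simp add: sum.delta in_keys_iff)
  finally show ?thesis .
qed

lemma lp_inv_add: "lp_inv (p + q) = lp_inv p + lp_inv q"
  by (rule poly_mapping_eqI) (simp add: lookup_lp_inv lookup_add)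
lemma lp_inv_diff: "lp_inv (p - q) = lp_inv p - lp_inv q"
  by (rule poly_mapping_eqI) (simp add: lookup_lp_inv lookup_minus)
lemma lp_inv_uminus: "lp_inv (- p) = - lp_inv p"
  by (rule poly_mapping_eqI) (simp add: lookup_lp_inv)
lemma lp_inv_zero[simp]: "lp_inv 0 = 0"
  by (rule poly_mapping_eqI) (simp add: lookup_lp_inv)
lemma lp_inv_inv[simp]: "lp_inv (lp_inv p) = p"
  by (rule poly_mapping_eqI) (simp add: lookup_lp_inv)
lemma lp_inv_single: "lp_inv (Poly_Mapping.single k v) = Poly_Mapping.single (- k) v"
  by (rule poly_mapping_eqI) (simp add: lookup_lp_inv lookup_single when_def)
lemma lp_inv_sum: "lp_inv (\<Sum>x\<in>A. f x) = (\<Sum>x\<in>A. lp_inv (f x))"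
  by (induction A rule: infinite_finite_induct) (auto simp: lp_inv_add)

lemma pm_decomp: "(p::lpoly) = (\<Sum>n\<in>Poly_Mapping.keys p. Poly_Mapping.single n (Poly_Mapping.lookup p n))"
proof (rule poly_mapping_eqI)
  fix k
  have "Poly_Mapping.lookup (\<Sum>n\<in>Poly_Mapping.keys p. Poly_Mapping.single n (Poly_Mapping.lookup p n)) k
     = (\<Sum>n\<in>Poly_Mapping.keys p. if n = k then Poly_Mapping.lookup p n else 0)"
    unfolding lookup_sum lookup_single when_def by (rule sum.cong) auto
  also have "\<dots> = Poly_Mapping.lookup p k" by (simp add: sum.delta' in_keys_iff)
  finally show "Poly_Mapping.lookup p k = Poly_Mapping.lookup (\<Sum>n\<in>Poly_Mapping.keys p. Poly_Mapping.single n (Poly_Mapping.lookup p n)) k" by simp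
qed

lemma lp_inv_mult: "lp_inv (p * q) = lp_inv p * lp_inv q"
proof -
  define P where "P = Poly_Mapping.keys p"
  define Q where "Q = Poly_Mapping.keys q"
  define a where "a = Poly_Mapping.lookup p"
  define b where "b = Poly_Mapping.lookup q"
  have p: "p = (\<Sum>n\<in>P. Poly_Mapping.single n (a n))" unfolding P_def a_def by (rule pm_decomp)
  have q: "q = (\<Sum>n\<in>Q. Poly_Mapping.single n (b n))" unfolding Q_def b_def by (rule pm_decomp)
  have "lp_inv (p * q) = lp_inv (\<Sum>i\<in>P. \<Sum>j\<in>Q. Poly_Mapping.single (i + j) (a i * b j))"
    by (subst p, subst q) (simp add: sum_product mult_single)
  also have "\<dots> = (\<Sum>i\<in>P. \<Sum>j\<in>Q. Poly_Mapping.single (- i + - j) (a i * b j))"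
    by (simp add: lp_inv_sum lp_inv_single add.commute)
  also have "\<dots> = lp_inv p * lp_inv q"
  proof -
    have "lp_inv p = (\<Sum>n\<in>P. Poly_Mapping.single (- n) (a n))"
      by (subst p) (simp add: lp_inv_sum lp_inv_single)
    moreover have "lp_inv q = (\<Sum>n\<in>Q. Poly_Mapping.single (- n) (b n))"
      by (subst q) (simp add: lp_inv_sum lp_inv_single)
    ultimately show ?thesis by (simp add: sum_product mult_single)
  qed
  finally show ?thesis .
qed

lemma lp_inv_one[simp]: "lp_inv 1 = 1"
  using lp_inv_single[of 0 1] by simp
lemma lp_inv_pow: "lp_inv (p ^ n) = lp_inv p ^ n"
  by (induction n) (simp_all add: lp_inv_mult)
lemma lp_inv_tpow: "lp_inv (tpow m) = tpow (- m)"
  by (simp add: tpow_def lp_inv_single)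
lemma lp_inv_lconst: "lp_inv (lconst c) = lconst c"
  by (simp add: lconst_def lp_inv_single)
lemma lp_inv_numeral[simp]: "lp_inv (numeral n) = numeral n"
  using lp_inv_single[of 0 "numeral n"] by simp

lemma lconst_mult: "lconst a * lconst b = lconst (a * b)"
  by (simp add: lconst_def mult_single)
lemma lconst_add: "lconst (a + b) = lconst a + lconst b"
  by (simp add: lconst_def single_add)
lemma lconst_diff: "lconst (a - b) = lconst a - lconst b"
  by (simp add: lconst_def single_diff)
lemma lconst_one[simp]: "lconst 1 = 1"
  by (simp add: lconst_def)
lemma lconst_zero[simp]: "lconst 0 = 0"
  by (simp add: lconst_def)
lemma lconst_numeral[simp]: "lconst (numeral n) = numeral n"
  by (simp add: lconst_def)
lemma lconst_pow: "lconst (a ^ n) = lconst a ^ n"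
  by (induction n) (simp_all flip: lconst_mult)
lemma lconst_uminus: "lconst (- a) = - lconst a"
  by (simp add: lconst_def single_uminus)

lemma tpow_add: "tpow (a + b) = tpow a * tpow b"
  by (simp add: tpow_def mult_single)
lemma tpow_0[simp]: "tpow 0 = 1"
  by (simp add: tpow_def)

definition sS :: lpoly where "sS = tpow 1 - 1"

definition dd :: "nat \<Rightarrow> int \<Rightarrow> lpoly" where
  "dd L m = tpow m - (\<Sum>k<L. lconst (binomi m k) * sS ^ k)"

lemma binomi_Suc: "binomi (m + 1) (Suc n) = binomi m n + binomi m (Suc n)"
  unfolding binomi_def by (simp add: gbinomial_Suc_Suc)
lemma binomi_0[simp]: "binomi m 0 = 1"
  unfolding binomi_def by simp

lemma shift_sum:
  "(\<Sum>k<Suc n. lconst (binomi (m + 1) k) * sS ^ k) =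
   (1 + sS) * (\<Sum>k<Suc n. lconst (binomi m k) * sS ^ k) - lconst (binomi m n) * sS ^ Suc n"
proof (induction n)
  case 0
  then show ?case by (simp add: algebra_simps)
next
  case (Suc n)
  show ?case
    apply (subst sum.lessThan_Suc)
    apply (subst Suc)
    apply (subst (2) sum.lessThan_Suc)
    apply (simp only: binomi_Suc lconst_add)
    apply (simp add: algebra_simps)
    done
qed

lemma tpow1: "tpow 1 = 1 + sS" by (simp add: sS_def)

lemma dd_step: "dd (Suc n) (m + 1) = tpow 1 * dd (Suc n) m + lconst (binomi m n) * sS ^ Suc n"
  unfolding dd_def shift_sum tpow_add tpow1 by (simp add: algebra_simps)

lemma tpow_inv: "tpow (-1) * tpow 1 = 1"
  by (simp flip: tpow_add)

lemma dd_dvd: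
  assumes "L \<ge> 1"
  shows "sS ^ L dvd dd L m"
proof -
  obtain n where L: "L = Suc n" using assms by (cases L) auto
  show ?thesis unfolding L
  proof (induction m rule: int_induct[where k = 0])
    case base
    have "(\<Sum>k<Suc n. lconst (binomi 0 k) * sS ^ k) = 1"
      by (subst sum.lessThan_Suc_shift) (simp add: binomi_def gbinomial_0_left)
    then show ?case by (simp add: dd_def)
  next
    case (step1 i)
    then show ?case unfolding dd_step by (intro dvd_add dvd_mult) auto
  next
    case (step2 i)
    have e: "dd (Suc n) i = tpow 1 * dd (Suc n) (i - 1) + lconst (binomi (i - 1) n) * sS ^ Suc n"
      using dd_step[of n "i - 1"] by simp
    have "dd (Suc n) (i - 1) = tpow (-1) * (tpow 1 * dd (Suc n) (i - 1))"
      by (simp add: mult.assoc[symmetric] tpow_inv)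
    also have "\<dots> = tpow (-1) * (dd (Suc n) i - lconst (binomi (i - 1) n) * sS ^ Suc n)"
      using e by (metis add_diff_cancel_right')
    finally show ?case using step2 by (metis dvd_diff dvd_mult dvd_mult2 dvd_refl)
  qed
qed

lemma OA_iff: "x \<in> OA \<longleftrightarrow> fst (snd x) = lp_inv (fst x) \<and> lp_inv (snd (snd x)) = - snd (snd x)"
  by (cases x) (auto simp: OA_def)

lemma lscale_fst[simp]: "fst (lscale c x) = lconst c * fst x"
  by (cases x) (simp add: lscale_def)
lemma lscale_fst_snd[simp]: "fst (snd (lscale c x)) = lconst c * fst (snd x)"
  by (cases x) (simp add: lscale_def)
lemma lscale_snd_snd[simp]: "snd (snd (lscale c x)) = lconst c * snd (snd x)"
  by (cases x) (simp add: lscale_def)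

lemma loop_eqI: "fst x = fst y \<Longrightarrow> fst (snd x) = fst (snd y) \<Longrightarrow> snd (snd x) = snd (snd y) \<Longrightarrow> (x::loop) = y"
  by (simp add: prod_eq_iff)

lemma lscale_zero[simp]: "lscale 0 x = 0"
  by (rule loop_eqI) simp_all
lemma lscale_one[simp]: "lscale 1 x = x"
  by (rule loop_eqI) simp_all
lemma lscale_lscale: "lscale c (lscale d x) = lscale (c * d) x"
  by (rule loop_eqI) (simp_all add: mult.assoc[symmetric] lconst_mult)
lemma lscale_diff: "lscale c (x - y) = lscale c x - lscale c y"
  by (rule loop_eqI) (simp_all add: algebra_simps)

lemma lp_inv_lconst_mult: "lp_inv (lconst c * p) = lconst c * lp_inv p"
  by (simp add: lp_inv_mult lp_inv_lconst)

lemma OA_zero: "0 \<in> OA" by (simp add: OA_iff)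
lemma OA_add: "x \<in> OA \<Longrightarrow> y \<in> OA \<Longrightarrow> x + y \<in> OA"
  by (simp add: OA_iff lp_inv_add)
lemma OA_diff: "x \<in> OA \<Longrightarrow> y \<in> OA \<Longrightarrow> x - y \<in> OA"
  by (simp add: OA_iff lp_inv_diff)
lemma OA_lscale: "x \<in> OA \<Longrightarrow> lscale c x \<in> OA"
  by (simp add: OA_iff lp_inv_lconst_mult)
lemma OA_sum: "(\<And>k. k \<in> A \<Longrightarrow> f k \<in> OA) \<Longrightarrow> sum f A \<in> OA"
  by (induction A rule: infinite_finite_induct) (auto intro: OA_zero OA_add)

lemma Iideal_iff: "x \<in> Iideal L \<longleftrightarrow> x \<in> OA \<and> sS ^ L dvd fst x \<and> sS ^ L dvd snd (snd x)"
  by (cases x) (auto simp: Iideal_def sS_def dvd_def)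

lemma I_zero: "0 \<in> Iideal L" by (simp add: Iideal_iff OA_zero)
lemma I_add: "x \<in> Iideal L \<Longrightarrow> y \<in> Iideal L \<Longrightarrow> x + y \<in> Iideal L"
  by (simp add: Iideal_iff OA_add)
lemma I_diff: "x \<in> Iideal L \<Longrightarrow> y \<in> Iideal L \<Longrightarrow> x - y \<in> Iideal L"
  by (simp add: Iideal_iff OA_diff)
lemma I_lscale: "x \<in> Iideal L \<Longrightarrow> lscale c x \<in> Iideal L"
  by (simp add: Iideal_iff OA_lscale)
lemma I_sum: "(\<And>k. k \<in> A \<Longrightarrow> f k \<in> Iideal L) \<Longrightarrow> sum f A \<in> Iideal L"
  by (induction A rule: infinite_finite_induct) (auto intro: I_zero I_add)

lemma qeq_refl: "qeq L x x" by (simp add: qeq_def I_zero)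

lemma tri:
  assumes h: "\<And>j. j < L \<Longrightarrow> (\<Sum>k<L. lscale (c j k) (D k)) \<in> Iideal L"
    and d: "\<And>j. c j j \<noteq> 0" and z: "\<And>j k. j < k \<Longrightarrow> c j k = 0"
  shows "j < L \<Longrightarrow> D j \<in> Iideal L"
proof (induction j rule: less_induct)
  case (less j)
  have "(\<Sum>k<L. lscale (c j k) (D k)) = (\<Sum>k<Suc j. lscale (c j k) (D k))"
    by (rule sum.mono_neutral_cong_right) (use less.prems z in auto)
  also have "\<dots> = (\<Sum>k<j. lscale (c j k) (D k)) + lscale (c j j) (D j)"
    by simp
  finally have "lscale (c j j) (D j) = (\<Sum>k<L. lscale (c j k) (D k)) - (\<Sum>k<j. lscale (c j k) (D k))"
    by (simp add: algebra_simps)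
  also have "\<dots> \<in> Iideal L"
    using less by (intro I_diff h I_sum I_lscale) auto
  finally have "lscale (1 / c j j) (lscale (c j j) (D j)) \<in> Iideal L" by (rule I_lscale)
  then show ?case using d[of j] by (simp add: lscale_lscale)
qed

definition Xc :: "nat \<Rightarrow> loop" where
  "Xc k = (2 * sS ^ k, 2 * lp_inv (sS ^ k), 0)"
definition Yc :: "nat \<Rightarrow> loop" where
  "Yc k = lscale ((-1) ^ k) (0, 0, sS ^ k - lp_inv (sS ^ k))"

lemma Xc_OA: "Xc k \<in> OA"
  by (simp add: Xc_def OA_def lp_inv_mult)
lemma Yc_OA: "Yc k \<in> OA"
  unfolding Yc_def by (rule OA_lscale) (simp add: OA_def lp_inv_diff)
lemma A_OA: "A_el m \<in> OA"
  by (simp add: A_el_def OA_def lp_inv_mult lp_inv_tpow)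
lemma G_OA: "G_el m \<in> OA"
  by (simp add: G_el_def OA_def lp_inv_diff lp_inv_tpow)

lemma lp_inv_sS: "lp_inv sS = - tpow (-1) * sS"
proof -
  have "lp_inv sS = tpow (-1) - 1" by (simp add: sS_def lp_inv_diff lp_inv_tpow)
  also have "\<dots> = - tpow (-1) * sS" using tpow_inv by (simp add: sS_def algebra_simps)
  finally show ?thesis .
qed

lemma dvd_lp_inv: "sS ^ L dvd p \<Longrightarrow> sS ^ L dvd lp_inv p"
proof -
  assume "sS ^ L dvd p"
  then obtain u where "p = sS ^ L * u" by (auto simp: dvd_def)
  then have "lp_inv p = sS ^ L * ((- tpow (-1)) ^ L * lp_inv u)"
  proof -
    have "lp_inv p = (- tpow (-1) * sS) ^ L * lp_inv u"
      using \<open>p = sS ^ L * u\<close> by (simp add: lp_inv_mult lp_inv_pow lp_inv_sS)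
    also have "\<dots> = sS ^ L * ((- tpow (-1)) ^ L * lp_inv u)"
      by (simp only: power_mult_distrib mult_ac)
    finally show ?thesis .
  qed
  then show ?thesis by simp
qed

lemma repA: "L \<ge> 1 \<Longrightarrow> rep_A L Xc"
  unfolding rep_A_def qeq_def
proof
  fix m assume L: "L \<ge> 1"
  have "fst (A_el m - (\<Sum>k<L. lscale (binomi m k) (Xc k))) = 2 * dd L m"
    by (simp add: fst_sum A_el_def Xc_def dd_def algebra_simps sum_distrib_left)
  moreover have "snd (snd (A_el m - (\<Sum>k<L. lscale (binomi m k) (Xc k)))) = 0"
    by (simp add: snd_sum A_el_def Xc_def)
  ultimately show "A_el m - (\<Sum>k<L. lscale (binomi m k) (Xc k)) \<in> Iideal L"
    unfolding Iideal_iff using dd_dvd[OF L, of m] A_OA Xc_OA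
    by (auto intro!: OA_diff OA_sum OA_lscale)
qed

lemma neg1sq: "(-1::complex) ^ k * b * (-1) ^ k = b"
  by (induction k) (auto simp: algebra_simps)

lemma repG: "L \<ge> 1 \<Longrightarrow> rep_G L Yc"
  unfolding rep_G_def qeq_def
proof
  fix m assume L: "L \<ge> 1"
  have e: "lscale ((-1) ^ k * binomi m k) (Yc k) = lscale (binomi m k) (0, 0, sS ^ k - lp_inv (sS ^ k))" for k
    unfolding Yc_def lscale_lscale neg1sq ..
  have li: "lp_inv (dd L m) = tpow (- m) - (\<Sum>k<L. lconst (binomi m k) * lp_inv (sS ^ k))"
    by (simp add: dd_def lp_inv_diff lp_inv_sum lp_inv_mult lp_inv_tpow lp_inv_lconst)
  have "snd (snd (G_el m - (\<Sum>k<L. lscale ((-1) ^ k * binomi m k) (Yc k)))) = dd L m - lp_inv (dd L m)"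
    unfolding e li by (simp add: snd_sum G_el_def dd_def algebra_simps sum_subtractf)
  moreover have "fst (G_el m - (\<Sum>k<L. lscale ((-1) ^ k * binomi m k) (Yc k))) = 0"
    by (simp add: fst_sum G_el_def Yc_def)
  ultimately show "G_el m - (\<Sum>k<L. lscale ((-1) ^ k * binomi m k) (Yc k)) \<in> Iideal L"
    unfolding Iideal_iff using dd_dvd[OF L, of m] dvd_lp_inv[OF dd_dvd[OF L, of m]] G_OA Yc_OA
    by (auto intro!: OA_diff OA_sum OA_lscale)
qed

lemma YX: "Yc k = lscale ((-1) ^ k / 4) (lbr (Xc k) (Xc 0))"
proof -
  have c: "lconst ((-1) ^ k / 4) * 4 = lconst ((-1) ^ k)"
    by (metis lconst_mult lconst_numeral nonzero_eq_divide_eq zero_neq_numeral)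
  have "lconst ((-1) ^ k / 4) * (2 * sS ^ k * 2 - 2 * lp_inv (sS ^ k) * 2)
     = (lconst ((-1) ^ k / 4) * 4) * (sS ^ k - lp_inv (sS ^ k))"
    by (simp add: algebra_simps)
  then show ?thesis
    by (simp add: Yc_def Xc_def lbr_def lscale_def c)
qed

lemma binomi_nat: "binomi (int j) k = of_nat (j choose k)"
  by (simp add: binomi_def binomial_gbinomial)

lemma sum_lscale_diff: "(\<Sum>k<L. lscale (c k) (U k)) - (\<Sum>k<L. lscale (c k) (V k)) = (\<Sum>k<L. lscale (c k) (U k - V k))"
  by (simp add: lscale_diff sum_subtractf)

lemma uniqA:
  assumes "rep_A L X'" "rep_A L X"
  shows "k < L \<Longrightarrow> qeq L (X' k) (X k)"
  unfolding qeq_def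
proof (rule tri[where c = "\<lambda>j k. binomi (int j) k"])
  fix j assume "j < L"
  have "(A_el (int j) - (\<Sum>k<L. lscale (binomi (int j) k) (X k))) -
        (A_el (int j) - (\<Sum>k<L. lscale (binomi (int j) k) (X' k))) \<in> Iideal L"
    using assms unfolding rep_A_def qeq_def by (blast intro: I_diff)
  then show "(\<Sum>k<L. lscale (binomi (int j) k) (X' k - X k)) \<in> Iideal L"
    by (simp flip: sum_lscale_diff)
qed (auto simp: binomi_nat)

lemma uniqG:
  assumes "rep_G L Y'" "rep_G L Y"
  shows "k < L \<Longrightarrow> qeq L (Y' k) (Y k)"
  unfolding qeq_def
proof (rule tri[where c = "\<lambda>j k. (-1) ^ k * binomi (int j) k"])
  fix j assume "j < L"
  have "(G_el (int j) - (\<Sum>k<L. lscale ((-1) ^ k * binomi (int j) k) (Y k))) -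
        (G_el (int j) - (\<Sum>k<L. lscale ((-1) ^ k * binomi (int j) k) (Y' k))) \<in> Iideal L"
    using assms unfolding rep_G_def qeq_def by (blast intro: I_diff)
  then show "(\<Sum>k<L. lscale ((-1) ^ k * binomi (int j) k) (Y' k - Y k)) \<in> Iideal L"
    by (simp flip: sum_lscale_diff)
qed (auto simp: binomi_nat)

theorem lemma6:
  fixes L :: nat
  assumes "L \<ge> 1"
  shows "\<exists>X Y. (\<forall>k<L. X k \<in> OA \<and> Y k \<in> OA) \<and> rep_A L X \<and> rep_G L Y \<and>
     (\<forall>X' Y'. (\<forall>k<L. X' k \<in> OA \<and> Y' k \<in> OA) \<and> rep_A L X' \<and> rep_G L Y' \<longrightarrow>
        (\<forall>k<L. qeq L (X' k) (X k) \<and> qeq L (Y' k) (Y k))) \<and>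
     (\<forall>k<L. qeq L (Y k) (lscale ((-1) ^ k / 4) (lbr (X k) (X 0))))"
proof (intro exI conjI allI impI)
  show "\<And>k. k < L \<Longrightarrow> Xc k \<in> OA" by (rule Xc_OA)
  show "\<And>k. k < L \<Longrightarrow> Yc k \<in> OA" by (rule Yc_OA)
  show "rep_A L Xc" using assms by (rule repA)
  show "rep_G L Yc" using assms by (rule repG)
  show "\<And>k. k < L \<Longrightarrow> qeq L (Yc k) (lscale ((-1) ^ k / 4) (lbr (Xc k) (Xc 0)))"
    by (simp flip: YX add: qeq_refl)
  fix X' Y' k
  assume h: "(\<forall>k<L. X' k \<in> OA \<and> Y' k \<in> OA) \<and> rep_A L X' \<and> rep_G L Y'" and k: "k < L"
  show "qeq L (X' k) (Xc k)" using uniqA h repA[OF assms] k by blast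
  show "qeq L (Y' k) (Yc k)" using uniqG h repG[OF assms] k by blast
qed

end
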